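(* Let $X$ be a completely subscalable nonnegative random variable with survival function $\overline{F}(x) = \mathbb{P}(X>x)$. Then $\overline{F}$ is continuous on $(0, \infty)$.
   Context: A nonnegative random variable $X$ with survival function $\overline{F}$ is called completely subscalable if $\theta \, \overline{F}(x) \leq \overline{F}(x/\theta)$ for all $x \geq 0$ and all $\theta \in (0,1)$. *)

theory Defs
  imports "HOL-Probability.Probability"
begin

definition surv :: "'a measure \<Rightarrow> ('a \<Rightarrow> real) \<Rightarrow> real \<Rightarrow> real" where
  "surv M X x = measure M {\<omega> \<in> space M. X \<omega> > x}"

definition completely_subscalable :: "'a measure \<Rightarrow> ('a \<Rightarrow> real) \<Rightarrow> bool" where
  "completely_subscalable M X \<longleftrightarrow>
     (\<forall>x::real. x \<ge> 0 \<longrightarrow> (\<forall>\<theta>::real. 0 < \<theta> \<and> \<theta> < 1 \<longrightarrow>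
        \<theta> * surv M X x \<le> surv M X (x / \<theta>)))"

end

theory Submission
  imports Defs
begin

theorem lemma7:
  fixes M :: "'a measure" and X :: "'a \<Rightarrow> real"
  assumes "prob_space M"
    and "X \<in> borel_measurable M"
    and "AE \<omega> in M. X \<omega> \<ge> 0"
    and "completely_subscalable M X"
  shows "continuous_on {0<..} (surv M X)"
proof -
  interpret prob_space M by fact
  define D where "D = distr M borel X"
  interpret D: real_distribution D unfolding D_def using assms(2) by simp
  have sv: "surv M X y = 1 - cdf D y" for y
  proof -
    have "surv M X y = measure D {y<..}"
      unfolding surv_def D_def using assms(2)
      by (subst measure_distr) (auto simp: vimage_def Int_def conj_commute)
    also have "{y<..} = UNIV - {..y}" by auto
    also have "measure D (UNIV - {..y}) = 1 - cdf D y"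
      using D.prob_compl[of "{..y}"] by (simp add: cdf_def)
    finally show ?thesis .
  qed
  have sveq: "surv M X = (\<lambda>y. 1 - cdf D y)" using sv by auto
  have "isCont (cdf D) x" if x: "x > 0" for x
  proof -
    have ineq: "\<theta> * (1 - cdf D (\<theta> * x)) \<le> 1 - cdf D x" if "0 < \<theta>" "\<theta> < 1" for \<theta>
    proof -
      have "\<theta> * surv M X (\<theta> * x) \<le> surv M X (\<theta> * x / \<theta>)"
        using assms(4) x that unfolding completely_subscalable_def
        by (metis less_eq_real_def mult_pos_pos)
      thus ?thesis using that by (simp add: sv)
    qed
    have fl: "filterlim (\<lambda>\<theta>. \<theta> * x) (at_left x) (at_left 1)"
    proof -
      have "((\<lambda>\<theta>. \<theta> * x) \<longlongrightarrow> 1 * x) (at_left 1)"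
        by (intro tendsto_intros)
      moreover have "eventually (\<lambda>\<theta>. \<theta> * x < x) (at_left (1::real))"
        using x eventually_at_left_real[of 0 1] by (auto elim!: eventually_mono)
      ultimately show ?thesis using tendsto_imp_filterlim_at_left by simp
    qed
    have lim1: "((\<lambda>\<theta>. cdf D (\<theta> * x)) \<longlongrightarrow> measure D {..<x}) (at_left 1)"
      using filterlim_compose[OF D.cdf_at_left fl] .
    have lim2: "((\<lambda>\<theta>. \<theta> * (1 - cdf D (\<theta> * x))) \<longlongrightarrow> 1 * (1 - measure D {..<x})) (at_left 1)"
      by (intro tendsto_intros lim1)
    have "1 * (1 - measure D {..<x}) \<le> 1 - cdf D x"
    proof (rule tendsto_upperbound[OF lim2])
      show "\<forall>\<^sub>F \<theta> in at_left 1. \<theta> * (1 - cdf D (\<theta> * x)) \<le> 1 - cdf D x"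
        using eventually_at_left_real[of 0 1] by (auto elim!: eventually_mono intro: ineq)
    qed (simp add: trivial_limit_at_left_real)
    hence "measure D {..x} \<le> measure D {..<x}" by (simp add: cdf_def)
    moreover have "measure D {..x} = measure D {..<x} + measure D {x}"
      unfolding ivl_disj_un(2)[symmetric] by (subst D.finite_measure_Union) auto
    ultimately have "measure D {x} = 0" using measure_nonneg[of D "{x}"] by linarith
    thus ?thesis using D.isCont_cdf by simp
  qed
  thus ?thesis unfolding sveq
    by (intro continuous_at_imp_continuous_on ballI continuous_intros) auto
qed

end
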